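(* Consider $N$ agents communicating over an undirected connected graph with weight matrix $W=[w_{ij}]\in\mathbb{R}^{N\times N}$ as described in the context, and run the DOGD-GT algorithm with constant step size $\eta>0$ on random losses $f_{t,i}$, $t=1,\dots,T$, $i=1,\dots,N$. Suppose Assumption 1 holds: each $f_{t,i}$ is convex and $L$-smooth, and there is a constant $D$ with $\mathbb{E}[\|\nabla f_{t,i}(x)\|^2]\le D$ for all $x$. Then \[ \mathbb{E}\Big[\sum_{i=1}^N\sum_{t=1}^T f_{t,i}(x_{t,i})-\sum_{i=1}^N\sum_{t=1}^T f_{t,i}(\bar{x}_t)\Big]\le 2L\sum_{t=1}^T\mathbb{E}\big[\|x_t-\mathbf{1}\bar{x}_t\|^2\big]. \]
   Context: Graph and weights: agents $\{1,\dots,N\}$ communicate over an undirected connected graph; $W=[w_{ij}]$ is doubly stochastic, with $w_{ij}>0$ if $(i,j)$ is an edge, $w_{ii}>0$, and $w_{ij}=0$ otherwise. Losses: the loss functions $f_{t,i}:\mathbb{R}^d\to\mathbb{R}$ are random, drawn from a common unknown distribution $\mathcal{P}$. DOGD-GT algorithm with step size $\eta$: set $x_{1,i}=0$ and $s_{1,i}=\nabla f_{1,i}(x_{1,i})$. For $t\ge 2$ set \[ s_{t,i}=\sum_j w_{ij}s_{t-1,j}+\nabla f_{t,i}(x_{t,i})-\nabla f_{t-1,i}(x_{t-1,i}), \] and for all $t$ set \[ x_{t+1,i}=\sum_j w_{ij}x_{t,j}-\eta s_{t,i}. \] At iteration $t$, agent $i$ incurs loss $f_{t,i}(x_{t,i})$.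 Notation: $\bar{x}_t=\frac1N\sum_i x_{t,i}$; $x_t$ is the stacked vector $(x_{t,1},\dots,x_{t,N})$; $\|x_t-\mathbf{1}\bar{x}_t\|^2=\sum_{i=1}^N\|x_{t,i}-\bar{x}_t\|^2$. *)

theory Defs
  imports "HOL-Probability.Probability"
begin

text \<open>Agents are indexed by 0,...,N-1; iterations by t = 1,2,...
  The state at iteration t (for t >= 1) is stored at index t - 1.
  G t i y is the gradient of f_{t,i} at the point y.\<close>

primrec dogd_state ::
  "nat \<Rightarrow> (nat \<Rightarrow> nat \<Rightarrow> real) \<Rightarrow> real \<Rightarrow> (nat \<Rightarrow> nat \<Rightarrow> 'a::real_vector \<Rightarrow> 'a)
   \<Rightarrow> nat \<Rightarrow> (nat \<Rightarrow> 'a) \<times> (nat \<Rightarrow> 'a)" where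
  "dogd_state N W eta G 0 = ((\<lambda>i. 0), (\<lambda>i. G 1 i 0))"
| "dogd_state N W eta G (Suc k) =
     (let x = fst (dogd_state N W eta G k);
          s = snd (dogd_state N W eta G k);
          x' = (\<lambda>i. (\<Sum>j<N. W i j *\<^sub>R x j) - eta *\<^sub>R s i);
          s' = (\<lambda>i. (\<Sum>j<N. W i j *\<^sub>R s j) + G (Suc (Suc k)) i (x' i) - G (Suc k) i (x i))
      in (x', s'))"

definition dogd_x ::
  "nat \<Rightarrow> (nat \<Rightarrow> nat \<Rightarrow> real) \<Rightarrow> real \<Rightarrow> (nat \<Rightarrow> nat \<Rightarrow> 'a::real_vector \<Rightarrow> 'a)
   \<Rightarrow> nat \<Rightarrow> nat \<Rightarrow> 'a" where
  "dogd_x N W eta G t i = fst (dogd_state N W eta G (t - 1)) i"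

definition dogd_xbar ::
  "nat \<Rightarrow> (nat \<Rightarrow> nat \<Rightarrow> real) \<Rightarrow> real \<Rightarrow> (nat \<Rightarrow> nat \<Rightarrow> 'a::real_vector \<Rightarrow> 'a)
   \<Rightarrow> nat \<Rightarrow> 'a" where
  "dogd_xbar N W eta G t = (1 / real N) *\<^sub>R (\<Sum>i<N. dogd_x N W eta G t i)"

end

theory Submission
  imports Defs
begin

lemma state_cong:
  "(\<And>\<tau>. \<tau> \<le> Suc k \<Longrightarrow> G \<tau> = G' \<tau>) \<Longrightarrow> dogd_state N W eta G k = dogd_state N W eta G' k"
proof (induction k)
  case 0 then show ?case by simp
next
  case (Suc k)
  have "dogd_state N W eta G k = dogd_state N W eta G' k" using Suc by simp
  moreover have "G (Suc (Suc k)) = G' (Suc (Suc k))" "G (Suc k) = G' (Suc k)" using Suc.prems by auto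
  ultimately show ?case by (simp add: Let_def)
qed

lemma x_cong:
  assumes "\<And>\<tau>. \<tau> < t \<Longrightarrow> G \<tau> = G' \<tau>"
  shows "dogd_x N W eta G t i = dogd_x N W eta G' t i"
proof (cases t)
  case 0 then show ?thesis by (simp add: dogd_x_def)
next
  case (Suc m)
  show ?thesis
  proof (cases m)
    case 0 then show ?thesis using Suc by (simp add: dogd_x_def)
  next
    case (Suc n)
    have "dogd_state N W eta G n = dogd_state N W eta G' n"
      by (rule state_cong) (use assms Suc \<open>t = Suc m\<close> in auto)
    moreover have "dogd_x N W eta G t i = fst (dogd_state N W eta G (Suc n)) i"
      "dogd_x N W eta G' t i = fst (dogd_state N W eta G' (Suc n)) i"
      using Suc \<open>t = Suc m\<close> by (simp_all add: dogd_x_def)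
    ultimately show ?thesis by (simp add: Let_def)
  qed
qed

lemma xbar_cong:
  assumes "\<And>\<tau>. \<tau> < t \<Longrightarrow> G \<tau> = G' \<tau>"
  shows "dogd_xbar N W eta G t = dogd_xbar N W eta G' t"
  unfolding dogd_xbar_def using x_cong[OF assms] by simp

lemma g_comp:
  assumes gm: "(\<lambda>(s, x). g s x) \<in> measurable (S \<Otimes>\<^sub>M borel) borel"
    and u: "u \<in> measurable A S" and f: "f \<in> borel_measurable A"
  shows "(\<lambda>a. g (u a) (f a)) \<in> borel_measurable A"
  using measurable_compose[OF measurable_Pair[OF u f] gm] by simp

lemma state_meas:
  fixes g :: "'s \<Rightarrow> 'a::euclidean_space \<Rightarrow> 'a"
  assumes gm: "(\<lambda>(s, x). g s x) \<in> measurable (S \<Otimes>\<^sub>M borel) borel"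
    and u: "\<And>\<tau> j. u \<tau> j \<in> measurable A S"
  shows "(\<lambda>a. fst (dogd_state N W eta (\<lambda>\<tau> j. g (u \<tau> j a)) k) i) \<in> borel_measurable A \<and>
         (\<lambda>a. snd (dogd_state N W eta (\<lambda>\<tau> j. g (u \<tau> j a)) k) i) \<in> borel_measurable A"
proof (induction k arbitrary: i)
  case 0
  show ?case using g_comp[OF gm u, of "\<lambda>_. 0"] by simp
next
  case (Suc k)
  let ?x = "\<lambda>a. fst (dogd_state N W eta (\<lambda>\<tau> j. g (u \<tau> j a)) k)"
  let ?s = "\<lambda>a. snd (dogd_state N W eta (\<lambda>\<tau> j. g (u \<tau> j a)) k)"
  have x: "\<And>i. (\<lambda>a. ?x a i) \<in> borel_measurable A" and s: "\<And>i. (\<lambda>a. ?s a i) \<in> borel_measurable A"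
    using Suc by auto
  have x': "\<And>i. (\<lambda>a. (\<Sum>j<N. W i j *\<^sub>R ?x a j) - eta *\<^sub>R ?s a i) \<in> borel_measurable A"
    using x s by measurable
  have s': "(\<lambda>a. (\<Sum>j<N. W i j *\<^sub>R ?s a j)
       + g (u (Suc (Suc k)) i a) ((\<Sum>j<N. W i j *\<^sub>R ?x a j) - eta *\<^sub>R ?s a i)
       - g (u (Suc k) i a) (?x a i)) \<in> borel_measurable A"
    using s g_comp[OF gm u x'] g_comp[OF gm u x] by measurable
  show ?case using x' s' by (simp add: Let_def)
qed

lemma tangent:
  fixes f :: "'a::euclidean_space \<Rightarrow> real"
  assumes cvx: "convex_on UNIV f" and der: "(f has_derivative (\<lambda>h. d \<bullet> h)) (at x)"
  shows "d \<bullet> (y - x) \<le> f y - f x"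
proof -
  define \<phi> where "\<phi> u = f (x + u *\<^sub>R (y - x))" for u :: real
  have "convex_on UNIV \<phi>"
  proof (rule convex_onI)
    fix t u v :: real assume t: "0 < t" "t < 1"
    have eq: "x + ((1 - t) *\<^sub>R u + t *\<^sub>R v) *\<^sub>R (y - x)
       = (1 - t) *\<^sub>R (x + u *\<^sub>R (y - x)) + t *\<^sub>R (x + v *\<^sub>R (y - x))"
      by (simp add: algebra_simps)
    show "\<phi> ((1 - t) *\<^sub>R u + t *\<^sub>R v) \<le> (1 - t) * \<phi> u + t * \<phi> v"
      unfolding \<phi>_def eq using convex_onD[OF cvx, of t] t by simp
  qed simp
  moreover have "(\<phi> has_field_derivative (d \<bullet> (y - x))) (at 0 within UNIV)"
  proof -
    have l: "((\<lambda>u. x + u *\<^sub>R (y - x)) has_derivative (\<lambda>h. h *\<^sub>R (y - x))) (at 0)"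
      by (auto intro!: derivative_eq_intros)
    have "((\<lambda>u. f (x + u *\<^sub>R (y - x))) has_derivative (\<lambda>h. d \<bullet> (h *\<^sub>R (y - x)))) (at 0)"
    proof -
      have der0: "(f has_derivative (\<lambda>h. d \<bullet> h)) (at (x + (0::real) *\<^sub>R (y - x)))" using der by simp
      show ?thesis using has_derivative_compose[OF l der0] by simp
    qed
    moreover have "(\<lambda>h. d \<bullet> (h *\<^sub>R (y - x))) = (\<lambda>h. (d \<bullet> (y - x)) * h)"
      by auto
    ultimately show ?thesis unfolding \<phi>_def has_field_derivative_def
      by simp
  qed
  ultimately have "\<phi> 1 - \<phi> 0 \<ge> d \<bullet> (y - x) * (1 - 0)"
    by (intro convex_on_imp_above_tangent) auto
  then show ?thesis by (simp add: \<phi>_def)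
qed

definition sqint :: "'w measure \<Rightarrow> ('w \<Rightarrow> 'a::euclidean_space) \<Rightarrow> bool" where
  "sqint M f \<longleftrightarrow> f \<in> borel_measurable M \<and> integrable M (\<lambda>\<omega>. (norm (f \<omega>))\<^sup>2)"

lemma sq_sum_le: "(norm (a + b :: 'a::real_normed_vector))\<^sup>2 \<le> 2 * (norm a)\<^sup>2 + 2 * (norm b)\<^sup>2"
proof -
  have "norm (a + b) \<le> norm a + norm b" by (rule norm_triangle_ineq)
  then have "(norm (a + b))\<^sup>2 \<le> (norm a + norm b)\<^sup>2" by (simp add: power_mono)
  also have "\<dots> \<le> 2 * (norm a)\<^sup>2 + 2 * (norm b)\<^sup>2"
    using sum_squares_ge_zero[of "norm a - norm b" 0] by (simp add: power2_eq_square algebra_simps)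
  finally show ?thesis .
qed

lemma sqint_add: "sqint M f \<Longrightarrow> sqint M g \<Longrightarrow> sqint M (\<lambda>\<omega>. f \<omega> + g \<omega>)"
  unfolding sqint_def
proof (intro conjI)
  assume a: "f \<in> borel_measurable M \<and> integrable M (\<lambda>\<omega>. (norm (f \<omega>))\<^sup>2)"
     "g \<in> borel_measurable M \<and> integrable M (\<lambda>\<omega>. (norm (g \<omega>))\<^sup>2)"
  then have [measurable]: "f \<in> borel_measurable M" "g \<in> borel_measurable M" by auto
  show m: "(\<lambda>\<omega>. f \<omega> + g \<omega>) \<in> borel_measurable M" by measurable
  show "integrable M (\<lambda>\<omega>. (norm (f \<omega> + g \<omega>))\<^sup>2)"
  proof (rule Bochner_Integration.integrable_bound)
    show "integrable M (\<lambda>\<omega>. 2 * (norm (f \<omega>))\<^sup>2 + 2 * (norm (g \<omega>))\<^sup>2)" using a by auto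
    show "(\<lambda>\<omega>. (norm (f \<omega> + g \<omega>))\<^sup>2) \<in> borel_measurable M" using m by measurable
    show "AE x in M. norm ((norm (f x + g x))\<^sup>2) \<le> norm (2 * (norm (f x))\<^sup>2 + 2 * (norm (g x))\<^sup>2)"
      using sq_sum_le by (intro AE_I2) auto
  qed
qed

lemma sqint_scaleR: "sqint M f \<Longrightarrow> sqint M (\<lambda>\<omega>. c *\<^sub>R f \<omega>)"
  unfolding sqint_def by (auto simp: power_mult_distrib)

lemma sqint_diff: "sqint M f \<Longrightarrow> sqint M g \<Longrightarrow> sqint M (\<lambda>\<omega>. f \<omega> - g \<omega>)"
  using sqint_add[of M f "\<lambda>\<omega>. (-1) *\<^sub>R g \<omega>"] sqint_scaleR[of M g "-1"] by simp

lemma sqint_zero: "sqint M (\<lambda>\<omega>. 0)"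
  unfolding sqint_def by simp

lemma sqint_sum: "(\<And>i. i \<in> A \<Longrightarrow> sqint M (f i)) \<Longrightarrow> sqint M (\<lambda>\<omega>. \<Sum>i\<in>A. f i \<omega>)"
proof (induction A rule: infinite_finite_induct)
  case (infinite A) then show ?case using sqint_zero by simp
next
  case empty then show ?case using sqint_zero by simp
next
  case (insert x F) then show ?case using sqint_add[of M "f x" "\<lambda>\<omega>. \<Sum>i\<in>F. f i \<omega>"] by simp
qed

lemma sqint_inner_integrable:
  assumes "sqint M f" "sqint M g"
  shows "integrable M (\<lambda>\<omega>. f \<omega> \<bullet> g \<omega>)"
proof (rule Bochner_Integration.integrable_bound)
  show "integrable M (\<lambda>\<omega>. (norm (f \<omega>))\<^sup>2 + (norm (g \<omega>))\<^sup>2)" using assms by (auto simp: sqint_def)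
  have [measurable]: "f \<in> borel_measurable M" "g \<in> borel_measurable M" using assms by (auto simp: sqint_def)
  show "(\<lambda>\<omega>. f \<omega> \<bullet> g \<omega>) \<in> borel_measurable M" by measurable
  show "AE x in M. norm (f x \<bullet> g x) \<le> norm ((norm (f x))\<^sup>2 + (norm (g x))\<^sup>2)"
  proof (intro AE_I2)
    fix x
    have "\<bar>f x \<bullet> g x\<bar> \<le> norm (f x) * norm (g x)" by (rule Cauchy_Schwarz_ineq2)
    also have "\<dots> \<le> (norm (f x))\<^sup>2 + (norm (g x))\<^sup>2"
    proof -
      have h1: "0 \<le> norm (f x) * norm (g x)" by simp
      have h2: "2 * (norm (f x) * norm (g x)) \<le> (norm (f x))\<^sup>2 + (norm (g x))\<^sup>2"
        using sum_squares_ge_zero[of "norm (f x) - norm (g x)" 0]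
        by (simp add: power2_eq_square algebra_simps)
      from h1 h2 show ?thesis by linarith
    qed
    finally show "norm (f x \<bullet> g x) \<le> norm ((norm (f x))\<^sup>2 + (norm (g x))\<^sup>2)" by simp
  qed
qed

lemma sqint_sqnorm_integrable: "sqint M f \<Longrightarrow> integrable M (\<lambda>\<omega>. (norm (f \<omega>))\<^sup>2)"
  by (simp add: sqint_def)

lemma g_bound:
  fixes g :: "'s \<Rightarrow> 'a::euclidean_space \<Rightarrow> 'a"
  assumes "norm (g s x - g s 0) \<le> L * norm (x - 0)"
  shows "(norm (g s x))\<^sup>2 \<le> 2 * (norm (g s 0))\<^sup>2 + 2 * L\<^sup>2 * (norm x)\<^sup>2"
proof -
  have "norm (g s x) \<le> norm (g s 0) + norm (g s x - g s 0)"
    by (metis add.commute diff_add_cancel norm_triangle_ineq)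
  also have "\<dots> \<le> norm (g s 0) + \<bar>L\<bar> * norm x" using assms
    by (smt (verit, best) abs_ge_self diff_zero mult_right_mono norm_ge_zero)
  finally have "(norm (g s x))\<^sup>2 \<le> (norm (g s 0) + \<bar>L\<bar> * norm x)\<^sup>2" by (simp add: power_mono)
  also have "\<dots> \<le> 2 * (norm (g s 0))\<^sup>2 + 2 * (\<bar>L\<bar> * norm x)\<^sup>2"
    using sum_squares_ge_zero[of "norm (g s 0) - \<bar>L\<bar> * norm x" 0]
    by (simp add: power2_eq_square algebra_simps)
  finally show ?thesis by (simp add: power_mult_distrib)
qed

lemma sqint_g:
  fixes g :: "'s \<Rightarrow> 'a::euclidean_space \<Rightarrow> 'a"
  assumes gm: "(\<lambda>(s, x). g s x) \<in> measurable (S \<Otimes>\<^sub>M borel) borel"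
    and xm: "\<xi> \<in> measurable M S" and dist: "distr M S \<xi> = P"
    and smooth: "\<And>s x y. s \<in> space S \<Longrightarrow> norm (g s x - g s y) \<le> L * norm (x - y)"
    and moment: "\<And>x. (\<integral>\<^sup>+ s. ennreal ((norm (g s x))\<^sup>2) \<partial>P) \<le> ennreal D"
    and f: "sqint M f"
  shows "sqint M (\<lambda>\<omega>. g (\<xi> \<omega>) (f \<omega>))"
  unfolding sqint_def
proof (intro conjI)
  have fm: "f \<in> borel_measurable M" using f by (simp add: sqint_def)
  show m: "(\<lambda>\<omega>. g (\<xi> \<omega>) (f \<omega>)) \<in> borel_measurable M" by (rule g_comp[OF gm xm fm])
  have m0: "(\<lambda>\<omega>. g (\<xi> \<omega>) 0) \<in> borel_measurable M" by (rule g_comp[OF gm xm]) simp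
  have gs0: "(\<lambda>s. g s 0) \<in> borel_measurable S" by (rule g_comp[OF gm measurable_id]) simp
  have i0: "integrable M (\<lambda>\<omega>. (norm (g (\<xi> \<omega>) 0))\<^sup>2)"
  proof (rule integrableI_bounded)
    show "(\<lambda>\<omega>. (norm (g (\<xi> \<omega>) 0))\<^sup>2) \<in> borel_measurable M" using m0 by measurable
    have "(\<integral>\<^sup>+ \<omega>. ennreal (norm ((norm (g (\<xi> \<omega>) 0))\<^sup>2)) \<partial>M)
        = (\<integral>\<^sup>+ \<omega>. ennreal ((norm (g (\<xi> \<omega>) 0))\<^sup>2) \<partial>M)" by simp
    also have "\<dots> = (\<integral>\<^sup>+ s. ennreal ((norm (g s 0))\<^sup>2) \<partial>distr M S \<xi>)"
      by (rule nn_integral_distr[symmetric]) (use xm gs0 in measurable)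
    also have "\<dots> \<le> ennreal D" using moment dist by simp
    also have "\<dots> < \<infinity>" by simp
    finally show "(\<integral>\<^sup>+ \<omega>. ennreal (norm ((norm (g (\<xi> \<omega>) 0))\<^sup>2)) \<partial>M) < \<infinity>" .
  qed
  show "integrable M (\<lambda>\<omega>. (norm (g (\<xi> \<omega>) (f \<omega>)))\<^sup>2)"
  proof (rule Bochner_Integration.integrable_bound)
    show "integrable M (\<lambda>\<omega>. 2 * (norm (g (\<xi> \<omega>) 0))\<^sup>2 + 2 * L\<^sup>2 * (norm (f \<omega>))\<^sup>2)"
      using i0 f by (auto simp: sqint_def)
    show "(\<lambda>\<omega>. (norm (g (\<xi> \<omega>) (f \<omega>)))\<^sup>2) \<in> borel_measurable M" using m by measurable
    show "AE \<omega> in M. norm ((norm (g (\<xi> \<omega>) (f \<omega>)))\<^sup>2) \<le> norm (2 * (norm (g (\<xi> \<omega>) 0))\<^sup>2 + 2 * L\<^sup>2 * (norm (f \<omega>))\<^sup>2)"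
    proof (intro AE_I2)
      fix \<omega> assume "\<omega> \<in> space M"
      then have "\<xi> \<omega> \<in> space S" using xm by (rule measurable_space[rotated])
      then have "(norm (g (\<xi> \<omega>) (f \<omega>)))\<^sup>2 \<le> 2 * (norm (g (\<xi> \<omega>) 0))\<^sup>2 + 2 * L\<^sup>2 * (norm (f \<omega>))\<^sup>2"
        using smooth by (intro g_bound) 
      then show "norm ((norm (g (\<xi> \<omega>) (f \<omega>)))\<^sup>2) \<le> norm (2 * (norm (g (\<xi> \<omega>) 0))\<^sup>2 + 2 * L\<^sup>2 * (norm (f \<omega>))\<^sup>2)"
        by simp
    qed
  qed
qed

locale dg =
  fixes M :: "'w measure" and S :: "'s measure" and P :: "'s measure"
    and xi :: "nat \<Rightarrow> nat \<Rightarrow> 'w \<Rightarrow> 's"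
    and g :: "'s \<Rightarrow> 'a::euclidean_space \<Rightarrow> 'a"
    and L D eta :: real and N :: nat and W :: "nat \<Rightarrow> nat \<Rightarrow> real"
  assumes prob: "prob_space M"
    and xi_meas: "\<And>t i. xi t i \<in> measurable M S"
    and xi_indep: "prob_space.indep_vars M (\<lambda>_. S) (\<lambda>(t, i). xi t i) UNIV"
    and xi_distr: "\<And>t i. distr M S (xi t i) = P"
    and g_meas: "(\<lambda>(s, x). g s x) \<in> measurable (S \<Otimes>\<^sub>M borel) borel"
    and smooth: "\<And>s x y. s \<in> space S \<Longrightarrow> norm (g s x - g s y) \<le> L * norm (x - y)"
    and moment: "\<And>x. (\<integral>\<^sup>+ s. ennreal ((norm (g s x))\<^sup>2) \<partial>P) \<le> ennreal D"
    and N_pos: "N \<ge> 1"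
begin

abbreviation "X t i \<omega> \<equiv> dogd_x N W eta (\<lambda>t i. g (xi t i \<omega>)) t i"
abbreviation "Xb t \<omega> \<equiv> dogd_xbar N W eta (\<lambda>t i. g (xi t i \<omega>)) t"

lemma sqint_gx: "sqint M f \<Longrightarrow> sqint M (\<lambda>\<omega>. g (xi t i \<omega>) (f \<omega>))"
  by (rule sqint_g[OF g_meas xi_meas xi_distr smooth moment])

lemma state_sqint:
  "sqint M (\<lambda>\<omega>. fst (dogd_state N W eta (\<lambda>t i. g (xi t i \<omega>)) k) i) \<and>
   sqint M (\<lambda>\<omega>. snd (dogd_state N W eta (\<lambda>t i. g (xi t i \<omega>)) k) i)"
proof (induction k arbitrary: i)
  case 0
  show ?case using sqint_zero sqint_gx[OF sqint_zero] by simp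
next
  case (Suc k)
  let ?x = "\<lambda>\<omega>. fst (dogd_state N W eta (\<lambda>t i. g (xi t i \<omega>)) k)"
  let ?s = "\<lambda>\<omega>. snd (dogd_state N W eta (\<lambda>t i. g (xi t i \<omega>)) k)"
  have x: "\<And>i. sqint M (\<lambda>\<omega>. ?x \<omega> i)" and s: "\<And>i. sqint M (\<lambda>\<omega>. ?s \<omega> i)"
    using Suc by auto
  have x': "\<And>i. sqint M (\<lambda>\<omega>. (\<Sum>j<N. W i j *\<^sub>R ?x \<omega> j) - eta *\<^sub>R ?s \<omega> i)"
    by (intro sqint_diff sqint_sum sqint_scaleR x s)
  have s': "sqint M (\<lambda>\<omega>. (\<Sum>j<N. W i j *\<^sub>R ?s \<omega> j)
       + g (xi (Suc (Suc k)) i \<omega>) ((\<Sum>j<N. W i j *\<^sub>R ?x \<omega> j) - eta *\<^sub>R ?s \<omega> i)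
       - g (xi (Suc k) i \<omega>) (?x \<omega> i))"
    by (intro sqint_diff sqint_add sqint_sum sqint_scaleR s sqint_gx x x')
  show ?case using x' s' by (simp add: Let_def)
qed

lemma X_sqint: "sqint M (X t i)"
  unfolding dogd_x_def using state_sqint by blast

lemma Xb_sqint: "sqint M (Xb t)"
  unfolding dogd_xbar_def by (intro sqint_scaleR sqint_sum X_sqint)

end

context dg begin

lemma g_int_P: "integrable P (\<lambda>s. g s y)"
proof -
  interpret prob_space M by (rule prob)
  have sq: "sqint M (\<lambda>\<omega>. g (xi 0 0 \<omega>) y)"
    by (rule sqint_gx) (simp add: sqint_def)
  have gy: "(\<lambda>s. g s y) \<in> borel_measurable S" by (rule g_comp[OF g_meas measurable_id]) simp
  have "integrable M (\<lambda>\<omega>. g (xi 0 0 \<omega>) y)"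
  proof (rule Bochner_Integration.integrable_bound)
    show "integrable M (\<lambda>\<omega>. 1 + (norm (g (xi 0 0 \<omega>) y))\<^sup>2)" using sq by (simp add: sqint_def)
    show "(\<lambda>\<omega>. g (xi 0 0 \<omega>) y) \<in> borel_measurable M" using sq by (simp add: sqint_def)
    show "AE x in M. norm (g (xi 0 0 x) y) \<le> norm (1 + (norm (g (xi 0 0 x) y))\<^sup>2)"
    proof (intro AE_I2)
      fix x
      have h: "2 * norm (g (xi 0 0 x) y) \<le> 1 + (norm (g (xi 0 0 x) y))\<^sup>2"
        using sum_squares_ge_zero[of "norm (g (xi 0 0 x) y) - 1" 0] 
        by (simp add: power2_eq_square algebra_simps)
      have "norm (g (xi 0 0 x) y) \<le> 1 + (norm (g (xi 0 0 x) y))\<^sup>2"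
        using h norm_ge_zero[of "g (xi 0 0 x) y"] by linarith
      then show "norm (g (xi 0 0 x) y) \<le> norm (1 + (norm (g (xi 0 0 x) y))\<^sup>2)" by simp
    qed
  qed
  then have "integrable (distr M S (xi 0 0)) (\<lambda>s. g s y)"
    by (subst integrable_distr_eq[OF xi_meas gy])
  then show ?thesis using xi_distr by simp
qed

lemma cross_zero:
  "(\<integral>\<omega>. (\<Sum>i<N. g (xi t i \<omega>) (Xb t \<omega>) \<bullet> (X t i \<omega> - Xb t \<omega>)) \<partial>M) = 0"
proof -
  interpret prob_space M by (rule prob)
  obtain \<omega>0 where "\<omega>0 \<in> space M" using not_empty by blast
  define s0 where "s0 = xi 0 0 \<omega>0"
  have s0: "s0 \<in> space S" unfolding s0_def using measurable_space[OF xi_meas \<open>\<omega>0 \<in> space M\<close>] .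
  define H where "H = {p :: nat \<times> nat. fst p < t}"
  define XX where "XX = (\<lambda>(t, i). xi t i)"
  define Vh where "Vh = (\<lambda>\<omega>. restrict (\<lambda>p. XX p \<omega>) H)"
  define Vs where "Vs = (\<lambda>\<omega>. restrict (\<lambda>p. XX p \<omega>) {(t, 0::nat)})"
  define u where "u = (\<lambda>\<tau> (j::nat) (v::nat \<times> nat \<Rightarrow> 's). if \<tau> < t then v (\<tau>, j) else s0)"
  let ?B = "PiM H (\<lambda>_. S)"
  have um: "u \<tau> j \<in> measurable ?B S" for \<tau> j
  proof (cases "\<tau> < t")
    case True
    then have "(\<tau>, j) \<in> H" by (simp add: H_def)
    then show ?thesis using True unfolding u_def by simp
  next
    case False then show ?thesis unfolding u_def using s0 by simp
  qed
  define \<Phi> where "\<Phi> = (\<lambda>i v. dogd_x N W eta (\<lambda>\<tau> j. g (u \<tau> j v)) t i)"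
  define \<Phi>b where "\<Phi>b = (\<lambda>v. dogd_xbar N W eta (\<lambda>\<tau> j. g (u \<tau> j v)) t)"
  have \<Phi>m[measurable]: "\<Phi> i \<in> borel_measurable ?B" for i
    unfolding \<Phi>_def dogd_x_def using state_meas[where u=u, OF g_meas um] by blast
  have \<Phi>bm[measurable]: "\<Phi>b \<in> borel_measurable ?B"
  proof -
    have "\<Phi>b = (\<lambda>v. (1 / real N) *\<^sub>R (\<Sum>i<N. \<Phi> i v))"
      by (simp add: \<Phi>b_def \<Phi>_def dogd_xbar_def)
    then show ?thesis by simp
  qed
  have eqG: "(\<lambda>\<tau> j. g (u \<tau> j (Vh \<omega>))) \<tau> = (\<lambda>\<tau> j. g (xi \<tau> j \<omega>)) \<tau>" if "\<tau> < t" for \<tau> \<omega>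
    using that by (auto simp: u_def Vh_def H_def XX_def)
  have XPhi: "X t i \<omega> = \<Phi> i (Vh \<omega>)" for i \<omega>
    unfolding \<Phi>_def by (rule x_cong) (simp add: eqG)
  have XbPhi: "Xb t \<omega> = \<Phi>b (Vh \<omega>)" for \<omega>
    unfolding \<Phi>b_def by (rule xbar_cong) (simp add: eqG)
  let ?Q = "distr M ?B Vh"
  have Vhm[measurable]: "Vh \<in> measurable M ?B"
    unfolding Vh_def XX_def by (intro measurable_restrict) (auto intro: xi_meas)
  have sQ: "sets ?Q = sets ?B" by simp
  interpret Q: prob_space ?Q by (rule prob_space_distr[OF Vhm])
  have PP: "prob_space P" using prob_space_distr[OF xi_meas] xi_distr by metis
  interpret PP: prob_space P by (rule PP)
  have sP: "sets P = sets S" using xi_distr[of 0 0] by (metis sets_distr)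
  have per_i: "(\<integral>\<omega>. g (xi t i \<omega>) (Xb t \<omega>) \<bullet> (X t i \<omega> - Xb t \<omega>) \<partial>M)
      = (\<integral>v. (\<integral>s. g s (\<Phi>b v) \<bullet> (\<Phi> i v - \<Phi>b v) \<partial>P) \<partial>?Q)
     \<and> integrable ?Q (\<lambda>v. \<integral>s. g s (\<Phi>b v) \<bullet> (\<Phi> i v - \<Phi>b v) \<partial>P)" for i
  proof -
    define Vs where "Vs = (\<lambda>\<omega>. restrict (\<lambda>p. XX p \<omega>) {(t, i)})"
    have ind0: "indep_var ?B Vh (PiM {(t, i)} (\<lambda>_. S)) Vs"
      unfolding Vh_def Vs_def XX_def
      by (rule indep_var_restrict[OF xi_indep]) (auto simp: H_def)
    let ?R = "PiM {(t, i)} (\<lambda>_. S)"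
    have Vsm[measurable]: "Vs \<in> measurable M ?R"
      unfolding Vs_def XX_def by (intro measurable_restrict) (auto intro: xi_meas)
    let ?P' = "distr M ?R Vs"
    interpret P': prob_space ?P' by (rule prob_space_distr[OF Vsm])
    interpret QP: pair_sigma_finite ?Q ?P'
      by (intro pair_sigma_finite.intro Q.sigma_finite_measure_axioms P'.sigma_finite_measure_axioms)
    have dist: "?Q \<Otimes>\<^sub>M ?P' = distr M (?B \<Otimes>\<^sub>M ?R) (\<lambda>\<omega>. (Vh \<omega>, Vs \<omega>))"
      using ind0 by (simp add: indep_var_distribution_eq)
    have evm[measurable]: "(\<lambda>w. w (t, i)) \<in> measurable ?R S" by simp
    define K where "K = (\<lambda>(v, w). g (w (t, i)) (\<Phi>b v) \<bullet> (\<Phi> i v - \<Phi>b v))"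
    have gK: "(\<lambda>p. g (snd p (t, i)) (\<Phi>b (fst p))) \<in> borel_measurable (?B \<Otimes>\<^sub>M ?R)"
      by (rule g_comp[OF g_meas]) measurable
    have Km: "K \<in> borel_measurable (?B \<Otimes>\<^sub>M ?R)"
    proof -
      have "K = (\<lambda>p. g (snd p (t, i)) (\<Phi>b (fst p)) \<bullet> (\<Phi> i (fst p) - \<Phi>b (fst p)))"
        by (auto simp: K_def)
      then show ?thesis using gK by simp
    qed
    have pairm: "(\<lambda>\<omega>. (Vh \<omega>, Vs \<omega>)) \<in> measurable M (?B \<Otimes>\<^sub>M ?R)"
      by measurable
    have ceq: "(\<lambda>\<omega>. g (xi t i \<omega>) (Xb t \<omega>) \<bullet> (X t i \<omega> - Xb t \<omega>)) = (\<lambda>\<omega>. K (Vh \<omega>, Vs \<omega>))"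
      by (auto simp: K_def XPhi XbPhi Vs_def XX_def)
    have intM: "integrable M (\<lambda>\<omega>. K (Vh \<omega>, Vs \<omega>))"
      unfolding ceq[symmetric]
      by (intro sqint_inner_integrable sqint_gx sqint_diff X_sqint Xb_sqint)
    have intQP: "integrable (?Q \<Otimes>\<^sub>M ?P') K"
      unfolding dist by (subst integrable_distr_eq[OF pairm Km]) (rule intM)
    have inner: "(\<integral>w. K (v, w) \<partial>?P') = (\<integral>s. g s (\<Phi>b v) \<bullet> (\<Phi> i v - \<Phi>b v) \<partial>P)" for v
    proof -
      have Fm: "(\<lambda>s. g s (\<Phi>b v) \<bullet> (\<Phi> i v - \<Phi>b v)) \<in> borel_measurable S"
        using g_comp[OF g_meas measurable_id, of "\<lambda>_. \<Phi>b v"] by simp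
      have "(\<integral>w. K (v, w) \<partial>?P') = (\<integral>\<omega>. K (v, Vs \<omega>) \<partial>M)"
      proof (rule integral_distr[OF Vsm])
        have "(\<lambda>w. K (v, w)) = (\<lambda>w. (\<lambda>s. g s (\<Phi>b v) \<bullet> (\<Phi> i v - \<Phi>b v)) (w (t, i)))"
          by (simp add: K_def)
        then show "(\<lambda>w. K (v, w)) \<in> borel_measurable ?R"
          using measurable_compose[OF evm Fm] by simp
      qed
      also have "\<dots> = (\<integral>\<omega>. g (xi t i \<omega>) (\<Phi>b v) \<bullet> (\<Phi> i v - \<Phi>b v) \<partial>M)"
        by (simp add: K_def Vs_def XX_def)
      also have "\<dots> = (\<integral>s. g s (\<Phi>b v) \<bullet> (\<Phi> i v - \<Phi>b v) \<partial>distr M S (xi t i))"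
        by (rule integral_distr[symmetric, OF xi_meas Fm])
      finally show ?thesis using xi_distr by simp
    qed
    have "(\<integral>\<omega>. g (xi t i \<omega>) (Xb t \<omega>) \<bullet> (X t i \<omega> - Xb t \<omega>) \<partial>M) = (\<integral>\<omega>. K (Vh \<omega>, Vs \<omega>) \<partial>M)"
      unfolding ceq ..
    also have "\<dots> = integral\<^sup>L (distr M (?B \<Otimes>\<^sub>M ?R) (\<lambda>\<omega>. (Vh \<omega>, Vs \<omega>))) K"
      by (rule integral_distr[OF pairm Km, symmetric])
    also have "\<dots> = integral\<^sup>L (?Q \<Otimes>\<^sub>M ?P') K" unfolding dist ..
    also have "\<dots> = (\<integral>v. (\<integral>w. K (v, w) \<partial>?P') \<partial>?Q)"
      by (rule QP.integral_fst'[OF intQP, symmetric])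
    finally show ?thesis using QP.integrable_fst'[OF intQP] by (simp add: inner)
  qed
  have Geq: "(\<Sum>i<N. \<integral>s. g s (\<Phi>b v) \<bullet> (\<Phi> i v - \<Phi>b v) \<partial>P) = 0" for v
  proof -
    have "(\<Sum>i<N. \<integral>s. g s (\<Phi>b v) \<bullet> (\<Phi> i v - \<Phi>b v) \<partial>P)
        = (\<Sum>i<N. (\<integral>s. g s (\<Phi>b v) \<partial>P) \<bullet> (\<Phi> i v - \<Phi>b v))"
      using g_int_P by simp
    also have "\<dots> = (\<integral>s. g s (\<Phi>b v) \<partial>P) \<bullet> (\<Sum>i<N. \<Phi> i v - \<Phi>b v)"
      by (simp add: inner_sum_right inner_commute)
    also have "(\<Sum>i<N. \<Phi> i v - \<Phi>b v) = 0"
    proof -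
      have "\<Phi>b v = (1 / real N) *\<^sub>R (\<Sum>i<N. \<Phi> i v)"
        by (simp add: \<Phi>b_def \<Phi>_def dogd_xbar_def)
      then have "real N *\<^sub>R \<Phi>b v = (\<Sum>i<N. \<Phi> i v)" using N_pos by simp
      then show ?thesis by (simp add: sum_subtractf sum_constant_scaleR)
    qed
    finally show ?thesis by simp
  qed
  have "(\<integral>\<omega>. (\<Sum>i<N. g (xi t i \<omega>) (Xb t \<omega>) \<bullet> (X t i \<omega> - Xb t \<omega>)) \<partial>M)
      = (\<Sum>i<N. \<integral>\<omega>. g (xi t i \<omega>) (Xb t \<omega>) \<bullet> (X t i \<omega> - Xb t \<omega>) \<partial>M)"
    by (rule Bochner_Integration.integral_sum) (intro sqint_inner_integrable sqint_gx sqint_diff X_sqint Xb_sqint)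
  also have "\<dots> = (\<Sum>i<N. \<integral>v. (\<integral>s. g s (\<Phi>b v) \<bullet> (\<Phi> i v - \<Phi>b v) \<partial>P) \<partial>?Q)"
    using per_i by simp
  also have "\<dots> = (\<integral>v. (\<Sum>i<N. \<integral>s. g s (\<Phi>b v) \<bullet> (\<Phi> i v - \<Phi>b v) \<partial>P) \<partial>?Q)"
    by (rule Bochner_Integration.integral_sum[symmetric]) (use per_i in blast)
  also have "\<dots> = 0" by (simp add: Geq)
  finally show ?thesis .
qed

end

lemma term_bound:
  fixes loss :: "'s \<Rightarrow> 'a::euclidean_space \<Rightarrow> real"
  assumes cvx: "convex_on UNIV (loss s)" and der: "(loss s has_derivative (\<lambda>h. g s x \<bullet> h)) (at x)"
    and sm: "norm (g s x - g s y) \<le> L * norm (x - y)"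
  shows "loss s x - loss s y \<le> L * (norm (x - y))\<^sup>2 + g s y \<bullet> (x - y)"
proof -
  have "g s x \<bullet> (y - x) \<le> loss s y - loss s x" by (rule tangent[OF cvx der])
  then have "loss s x - loss s y \<le> g s x \<bullet> (x - y)"
    by (smt (verit) inner_diff_right)
  also have "\<dots> = (g s x - g s y) \<bullet> (x - y) + g s y \<bullet> (x - y)" by (simp add: inner_diff_left)
  also have "(g s x - g s y) \<bullet> (x - y) \<le> norm (g s x - g s y) * norm (x - y)"
    by (rule norm_cauchy_schwarz)
  also have "\<dots> \<le> L * norm (x - y) * norm (x - y)" by (rule mult_right_mono[OF sm]) simp
  finally show ?thesis by (simp add: power2_eq_square mult.assoc)
qed

theorem lemma1:
  fixes N T :: nat
    and W :: "nat \<Rightarrow> nat \<Rightarrow> real"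
    and E :: "nat \<Rightarrow> nat \<Rightarrow> bool"
    and eta L D :: real
    and M :: "'w measure"
    and S :: "'s measure"
    and P :: "'s measure"
    and xi :: "nat \<Rightarrow> nat \<Rightarrow> 'w \<Rightarrow> 's"
    and loss :: "'s \<Rightarrow> 'a::euclidean_space \<Rightarrow> real"
    and g :: "'s \<Rightarrow> 'a \<Rightarrow> 'a"
  assumes N_pos: "N \<ge> 1"
    and E_sym: "\<And>i j. E i j \<Longrightarrow> E j i"
    and E_irrefl: "\<And>i. \<not> E i i"
    and connected: "\<And>i j. i < N \<Longrightarrow> j < N \<Longrightarrow> (\<lambda>a b. a < N \<and> b < N \<and> E a b)\<^sup>*\<^sup>* i j"
    and W_edge: "\<And>i j. i < N \<Longrightarrow> j < N \<Longrightarrow> E i j \<Longrightarrow> W i j > 0"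
    and W_diag: "\<And>i. i < N \<Longrightarrow> W i i > 0"
    and W_zero: "\<And>i j. i < N \<Longrightarrow> j < N \<Longrightarrow> i \<noteq> j \<Longrightarrow> \<not> E i j \<Longrightarrow> W i j = 0"
    and W_nonneg: "\<And>i j. i < N \<Longrightarrow> j < N \<Longrightarrow> W i j \<ge> 0"
    and W_row: "\<And>i. i < N \<Longrightarrow> (\<Sum>j<N. W i j) = 1"
    and W_col: "\<And>j. j < N \<Longrightarrow> (\<Sum>i<N. W i j) = 1"
    and eta_pos: "eta > 0"
    and prob: "prob_space M"
    and xi_meas: "\<And>t i. xi t i \<in> measurable M S"
    and xi_indep: "prob_space.indep_vars M (\<lambda>_. S) (\<lambda>(t, i). xi t i) UNIV"
    and xi_distr: "\<And>t i. distr M S (xi t i) = P"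
    and loss_meas: "(\<lambda>(s, x). loss s x) \<in> borel_measurable (S \<Otimes>\<^sub>M borel)"
    and g_meas: "(\<lambda>(s, x). g s x) \<in> measurable (S \<Otimes>\<^sub>M borel) borel"
    and grad: "\<And>s x. s \<in> space S \<Longrightarrow> (loss s has_derivative (\<lambda>h. g s x \<bullet> h)) (at x)"
    and convex: "\<And>s. s \<in> space S \<Longrightarrow> convex_on UNIV (loss s)"
    and smooth: "\<And>s x y. s \<in> space S \<Longrightarrow> norm (g s x - g s y) \<le> L * norm (x - y)"
    and moment: "\<And>x. (\<integral>\<^sup>+ s. ennreal ((norm (g s x))\<^sup>2) \<partial>P) \<le> ennreal D"
  shows "(\<integral>\<omega>. (\<Sum>i<N. \<Sum>t\<in>{1..T}. loss (xi t i \<omega>) (dogd_x N W eta (\<lambda>t i. g (xi t i \<omega>)) t i))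
                 - (\<Sum>i<N. \<Sum>t\<in>{1..T}. loss (xi t i \<omega>) (dogd_xbar N W eta (\<lambda>t i. g (xi t i \<omega>)) t)) \<partial>M)
         \<le> 2 * L * (\<Sum>t\<in>{1..T}. \<integral>\<omega>. (\<Sum>i<N. (norm (dogd_x N W eta (\<lambda>t i. g (xi t i \<omega>)) t i
                                   - dogd_xbar N W eta (\<lambda>t i. g (xi t i \<omega>)) t))\<^sup>2) \<partial>M)"
proof -
  interpret dg M S P xi g L D eta N W
    by (rule dg.intro[OF prob xi_meas xi_indep xi_distr g_meas smooth moment N_pos])
  interpret prob_space M by (rule prob)
  obtain \<omega>0 where "\<omega>0 \<in> space M" using not_empty by blast
  have s0: "xi 0 0 \<omega>0 \<in> space S" using measurable_space[OF xi_meas \<open>\<omega>0 \<in> space M\<close>] .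
  obtain b :: 'a where b: "b \<in> Basis" using nonempty_Basis by blast
  have "0 \<le> L * norm (b - 0)" using smooth[OF s0, of b 0] norm_ge_zero order_trans by blast
  then have L0: "0 \<le> L" using b by simp
  define A where "A = (\<lambda>t \<omega>. \<Sum>i<N. (norm (X t i \<omega> - Xb t \<omega>))\<^sup>2)"
  define C where "C = (\<lambda>t \<omega>. \<Sum>i<N. g (xi t i \<omega>) (Xb t \<omega>) \<bullet> (X t i \<omega> - Xb t \<omega>))"
  define F where "F = (\<lambda>\<omega>. (\<Sum>i<N. \<Sum>t\<in>{1..T}. loss (xi t i \<omega>) (X t i \<omega>))
                 - (\<Sum>i<N. \<Sum>t\<in>{1..T}. loss (xi t i \<omega>) (Xb t \<omega>)))"
  define U where "U = (\<lambda>\<omega>. \<Sum>t\<in>{1..T}. L * A t \<omega> + C t \<omega>)"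
  have intA: "integrable M (A t)" for t
    unfolding A_def by (intro Bochner_Integration.integrable_sum sqint_sqnorm_integrable sqint_diff X_sqint Xb_sqint)
  have intC: "integrable M (C t)" for t
    unfolding C_def by (intro Bochner_Integration.integrable_sum sqint_inner_integrable sqint_gx sqint_diff X_sqint Xb_sqint)
  have intU: "integrable M U"
    unfolding U_def using intA intC by auto
  have FU: "F \<omega> \<le> U \<omega>" if "\<omega> \<in> space M" for \<omega>
  proof -
    have "F \<omega> = (\<Sum>t\<in>{1..T}. \<Sum>i<N. loss (xi t i \<omega>) (X t i \<omega>) - loss (xi t i \<omega>) (Xb t \<omega>))"
      unfolding F_def sum_subtractf[symmetric]
      by (simp only: sum.swap[of _ "{..<N}" "{1..T}"])
    also have "\<dots> \<le> (\<Sum>t\<in>{1..T}. \<Sum>i<N. L * (norm (X t i \<omega> - Xb t \<omega>))\<^sup>2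
                     + g (xi t i \<omega>) (Xb t \<omega>) \<bullet> (X t i \<omega> - Xb t \<omega>))"
    proof (intro sum_mono)
      fix t i
      have s: "xi t i \<omega> \<in> space S" using measurable_space[OF xi_meas that] .
      show "loss (xi t i \<omega>) (X t i \<omega>) - loss (xi t i \<omega>) (Xb t \<omega>)
          \<le> L * (norm (X t i \<omega> - Xb t \<omega>))\<^sup>2 + g (xi t i \<omega>) (Xb t \<omega>) \<bullet> (X t i \<omega> - Xb t \<omega>)"
        by (rule term_bound[where loss=loss and s="xi t i \<omega>" and g=g and x="X t i \<omega>" and y="Xb t \<omega>" and L=L,
              OF convex[OF s] grad[OF s] smooth[OF s]])
    qed
    also have "\<dots> = U \<omega>"
      unfolding U_def A_def C_def by (simp add: sum.distrib sum_distrib_left)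
    finally show ?thesis .
  qed
  have intU_eq: "integral\<^sup>L M U = L * (\<Sum>t\<in>{1..T}. integral\<^sup>L M (A t))"
  proof -
    have "integral\<^sup>L M U = (\<Sum>t\<in>{1..T}. integral\<^sup>L M (\<lambda>\<omega>. L * A t \<omega> + C t \<omega>))"
      unfolding U_def by (rule Bochner_Integration.integral_sum) (use intA intC in auto)
    also have "\<dots> = (\<Sum>t\<in>{1..T}. L * integral\<^sup>L M (A t) + integral\<^sup>L M (C t))"
      using intA intC by simp
    also have "\<dots> = (\<Sum>t\<in>{1..T}. L * integral\<^sup>L M (A t))"
      using cross_zero by (simp add: C_def)
    finally show ?thesis by (simp add: sum_distrib_left)
  qed
  have Apos: "0 \<le> (\<Sum>t\<in>{1..T}. integral\<^sup>L M (A t))"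
  proof (rule sum_nonneg)
    fix t show "0 \<le> integral\<^sup>L M (A t)"
      unfolding A_def by (rule Bochner_Integration.integral_nonneg) (simp add: sum_nonneg)
  qed
  have UR: "integral\<^sup>L M U \<le> 2 * L * (\<Sum>t\<in>{1..T}. integral\<^sup>L M (A t))"
    unfolding intU_eq using L0 Apos by (simp add: mult_right_mono)
  have "integral\<^sup>L M F \<le> 2 * L * (\<Sum>t\<in>{1..T}. integral\<^sup>L M (A t))"
  proof (cases "integrable M F")
    case True
    have "integral\<^sup>L M F \<le> integral\<^sup>L M U" by (rule integral_mono[OF True intU FU])
    then show ?thesis using UR by linarith
  next
    case False
    then show ?thesis using L0 Apos by (simp add: not_integrable_integral_eq)
  qed
  then show ?thesis unfolding F_def A_def .
qed

end
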